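(* Let $\alpha=1/10$ and $V(\mathbf{y})=1+\sum_{i=1}^{n-1}\alpha^iy_i$ for $\mathbf{y}\in\mathbb{R}_+^{n-1}$. Then for all $\mathbf{y}\in\mathbb{R}_+^{n-1}$, $$\mathcal{L}_nV(\mathbf{y})\le\alpha-\frac{1-\alpha}{2}\sum_{i=1}^{n-1}\alpha^iy_i^2,$$ and consequently $\mathcal{L}_nV(\mathbf{y})\le\alpha-\frac{(1-\alpha)^2}{2\alpha}(V(\mathbf{y})-1)^2$.
   Context: Fix $n\ge2$ and a probability law $\theta$ on $(0,\infty)$ with $\int z\,\theta(dz)=1$. $\mathcal{L}_n$ is the generator of the gap process of the Stochastic Follow-the-Leader system, acting on functions $f$ on $\mathbb{R}_+^{n-1}$ by $$\mathcal{L}_nf(\mathbf{y})=y_{n-1}\mathbb{E}_U[f(\mathbf{y}-y_{n-1}Ue_{n-1})-f(\mathbf{y})]+\sum_{i=1}^{n-2}y_i\mathbb{E}_U[f(\mathbf{y}+y_iU(e_{i+1}-e_i))-f(\mathbf{y})]+\mathbb{E}_\theta[f(\mathbf{y}+Ze_1)-f(\mathbf{y})],$$ with $U\sim\mathrm{U}(0,1)$, $Z\sim\theta$ (applied to linear functions, where the expectations are finite). *)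

theory Defs
  imports "HOL-Probability.Probability"
begin

text \<open>Gap vectors y in R_+^(n-1) are represented as functions nat => real,
  using the coordinates y 1, ..., y (n-1).\<close>

definition EU :: "(real \<Rightarrow> real) \<Rightarrow> real" where
  "EU g = integral\<^sup>L (uniform_measure lborel {0<..<1}) g"

definition SFL_gen :: "nat \<Rightarrow> real measure \<Rightarrow> ((nat \<Rightarrow> real) \<Rightarrow> real) \<Rightarrow> (nat \<Rightarrow> real) \<Rightarrow> real" where
  "SFL_gen n \<theta> f y =
     y (n - 1) * EU (\<lambda>u. f (y(n - 1 := y (n - 1) - y (n - 1) * u)) - f y)
     + (\<Sum>i = 1..n - 2. y i * EU (\<lambda>u. f (y(i := y i - y i * u, i + 1 := y (i + 1) + y i * u)) - f y))
     + integral\<^sup>L \<theta> (\<lambda>z. f (y(1 := y 1 + z)) - f y)"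

definition Lyap :: "nat \<Rightarrow> real \<Rightarrow> (nat \<Rightarrow> real) \<Rightarrow> real" where
  "Lyap n \<alpha> y = 1 + (\<Sum>i = 1..n - 1. \<alpha> ^ i * y i)"

end

theory Submission
  imports Defs
begin
lemma unif_eq: "uniform_measure lborel {0<..<(1::real)} = density lborel (\<lambda>x. ennreal (indicator {0<..<1} x))"
  unfolding uniform_measure_def
  by (intro density_cong) (auto split: split_indicator)

lemma EU_lin: "EU (\<lambda>u. c * u) = c / 2"
proof -
  have "EU (\<lambda>u. c * u) = integral\<^sup>L lborel (\<lambda>x. indicator {0<..<1} x *\<^sub>R (c * x))"
    unfolding EU_def unif_eq by (subst integral_density) auto
  also have "\<dots> = (LBINT x=ereal 0..ereal 1. c * x)"
    unfolding interval_lebesgue_integral_def set_lebesgue_integral_def einterval_def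
    by (subst if_P, simp, rule Bochner_Integration.integral_cong, auto split: split_indicator)
  also have "\<dots> = (\<lambda>x. c*x^2/2) 1 - (\<lambda>x. c*x^2/2) 0"
    by (rule interval_integral_FTC_finite) (auto simp flip: has_real_derivative_iff_has_vector_derivative intro!: derivative_eq_intros continuous_intros)
  finally show ?thesis by simp
qed
lemma Lyap_diff: "Lyap n a y' - Lyap n a y = (\<Sum>i=1..n-1. a^i*(y' i - y i))"
  by (simp add: Lyap_def sum_subtractf algebra_simps)

lemma Lyap_upd1:
  assumes "k \<in> {1..n-1}"
  shows "Lyap n a (y(k:=v)) - Lyap n a y = a^k*(v - y k)"
proof -
  have "(\<Sum>i=1..n-1. a^i*((y(k:=v)) i - y i)) = (\<Sum>i\<in>{1..n-1}. if i = k then a^k*(v - y k) else 0)"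
    by (rule sum.cong) auto
  also have "\<dots> = a^k*(v - y k)" using assms by simp
  finally show ?thesis by (simp add: Lyap_diff)
qed

lemma Lyap_upd2:
  assumes "k \<in> {1..n-1}" "k+1 \<in> {1..n-1}"
  shows "Lyap n a (y(k:=v, k+1:=w)) - Lyap n a y = a^k*(v - y k) + a^(k+1)*(w - y (k+1))"
proof -
  have "(\<Sum>i=1..n-1. a^i*((y(k:=v, k+1:=w)) i - y i)) = (\<Sum>i\<in>{1..n-1}. (if i = k then a^k*(v - y k) else 0) + (if i = k+1 then a^(k+1)*(w - y (k+1)) else 0))"
    by (rule sum.cong) auto
  also have "\<dots> = a^k*(v - y k) + a^(k+1)*(w - y (k+1))" using assms by (simp add: sum.distrib)
  finally show ?thesis by (simp add: Lyap_diff)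
qed

lemma SFL_Lyap:
  fixes a :: real
  assumes n: "n \<ge> 2" and P: "prob_space \<theta>"
    and int: "integrable \<theta> (\<lambda>z. z)" and m1: "integral\<^sup>L \<theta> (\<lambda>z. z) = 1"
  shows "SFL_gen n \<theta> (Lyap n a) y = a - a^(n-1) * (y (n-1))^2/2 - (\<Sum>i=1..n-2. (1-a) * a^i * (y i)^2/2)"
proof -
  have k1: "n - 1 \<in> {1..n-1}" using n by auto
  have T1: "y (n - 1) * EU (\<lambda>u. Lyap n a (y(n - 1 := y (n - 1) - y (n - 1) * u)) - Lyap n a y)
      = - (a^(n-1) * (y (n-1))^2/2)"
  proof -
    have "(\<lambda>u. Lyap n a (y(n - 1 := y (n - 1) - y (n - 1) * u)) - Lyap n a y) = (\<lambda>u. (-(a^(n-1)*y(n-1))) * u)"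
      by (rule ext, subst Lyap_upd1[OF k1]) (simp add: algebra_simps)
    then show ?thesis by (simp only: EU_lin) (simp add: power2_eq_square)
  qed
  have T2: "(\<Sum>i = 1..n - 2. y i * EU (\<lambda>u. Lyap n a (y(i := y i - y i * u, i + 1 := y (i + 1) + y i * u)) - Lyap n a y))
     = (\<Sum>i=1..n-2. - ((1-a) * a^i * (y i)^2/2))"
  proof (rule sum.cong)
    fix i assume i: "i \<in> {1..n-2}"
    then have a1: "i \<in> {1..n-1}" "i+1 \<in> {1..n-1}" by auto
    have "(\<lambda>u. Lyap n a (y(i := y i - y i * u, i + 1 := y (i + 1) + y i * u)) - Lyap n a y) = (\<lambda>u. ((a^(i+1) - a^i)*y i) * u)"
      by (rule ext, subst Lyap_upd2[OF a1]) (simp add: algebra_simps)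
    then show "y i * EU (\<lambda>u. Lyap n a (y(i := y i - y i * u, i + 1 := y (i + 1) + y i * u)) - Lyap n a y) = - ((1-a) * a^i * (y i)^2/2)"
      by (simp only: EU_lin) (simp add: power2_eq_square field_simps)
  qed simp
  have T3: "integral\<^sup>L \<theta> (\<lambda>z. Lyap n a (y(1 := y 1 + z)) - Lyap n a y) = a"
  proof -
    have k: "1 \<in> {1..n-1}" using n by auto
    have "(\<lambda>z. Lyap n a (y(1 := y 1 + z)) - Lyap n a y) = (\<lambda>z. a * z)"
      by (rule ext, subst Lyap_upd1[OF k]) simp
    then show ?thesis using m1 by simp
  qed
  show ?thesis unfolding SFL_gen_def T1 T2 T3 by (simp add: sum_negf)
qed

lemma geom: "(\<Sum>i=1..m. (a::real)^i) * (1-a) = a - a^(m+1)"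
proof (induction m)
  case (Suc m)
  have "(\<Sum>i=1..Suc m. a^i) * (1-a) = (\<Sum>i=1..m. a^i) * (1-a) + a^(Suc m) * (1-a)"
    by (simp add: sum.cl_ivl_Suc distrib_right)
  also have "\<dots> = a - a^(Suc m) + a^(Suc m) * (1-a)" by (subst Suc.IH) simp
  also have "\<dots> = a - a^(Suc m + 1)" by (simp add: algebra_simps)
  finally show ?case .
qed simp

theorem mainTheorem10:
  fixes n :: nat and \<theta> :: "real measure" and y :: "nat \<Rightarrow> real"
  assumes "n \<ge> 2"
    and "prob_space \<theta>" and "sets \<theta> = sets borel"
    and "AE z in \<theta>. 0 < z"
    and "integrable \<theta> (\<lambda>z. z)" and "integral\<^sup>L \<theta> (\<lambda>z. z) = 1"
    and "\<forall>i\<in>{1..n - 1}. 0 \<le> y i"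
  shows "SFL_gen n \<theta> (Lyap n (1/10)) y
           \<le> 1/10 - (1 - 1/10) / 2 * (\<Sum>i = 1..n - 1. (1/10) ^ i * (y i)\<^sup>2)
       \<and> SFL_gen n \<theta> (Lyap n (1/10)) y
           \<le> 1/10 - (1 - 1/10)\<^sup>2 / (2 * (1/10)) * (Lyap n (1/10) y - 1)\<^sup>2"
proof -
  define a :: real where "a = 1/10"
  define S where "S = (\<Sum>i = 1..n - 1. a ^ i * (y i)\<^sup>2)"
  obtain m where nm: "n = Suc (Suc m)" using assms(1) by (metis add_2_eq_Suc le_Suc_ex)
  have E: "SFL_gen n \<theta> (Lyap n a) y = a - a^(n-1) * (y (n-1))^2/2 - (\<Sum>i=1..n-2. (1-a) * a^i * (y i)^2/2)"
    by (rule SFL_Lyap) (use assms in auto)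
  have Ssplit: "S = (\<Sum>i=1..m. a^i * (y i)^2) + a^(Suc m) * (y (Suc m))^2"
    unfolding S_def nm by simp
  have "(\<Sum>i=1..n-2. (1-a) * a^i * (y i)^2/2) = (1-a)/2 * (\<Sum>i=1..m. a^i * (y i)^2)"
    unfolding nm by (simp add: sum_distrib_left sum_divide_distrib algebra_simps)
  moreover have "a^(Suc m) * (y (Suc m))^2 \<ge> 0" unfolding a_def by simp
  ultimately have P1: "SFL_gen n \<theta> (Lyap n a) y \<le> a - (1-a)/2 * S"
    unfolding E Ssplit using nm unfolding a_def by (simp add: algebra_simps)
  have CS: "(Lyap n a y - 1)^2 \<le> (\<Sum>i=1..n-1. a^i) * S"
  proof -
    have "Lyap n a y - 1 = (\<Sum>i=1..n-1. sqrt (a^i) * (sqrt (a^i) * y i))"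
      unfolding Lyap_def a_def by (simp add: mult.assoc[symmetric])
    moreover have "(\<Sum>i=1..n-1. (sqrt (a^i))^2) = (\<Sum>i=1..n-1. a^i)"
      unfolding a_def by simp
    moreover have "(\<Sum>i=1..n-1. (sqrt (a^i) * y i)^2) = S"
      unfolding S_def a_def by (simp add: power_mult_distrib)
    ultimately show ?thesis using Cauchy_Schwarz_ineq_sum[of "\<lambda>i. sqrt (a^i)" "\<lambda>i. sqrt (a^i) * y i" "{1..n-1}"]
      by simp
  qed
  have G: "(\<Sum>i=1..n-1. a^i) \<le> 1/9"
    using geom[where m="n-1" and a=a] unfolding a_def by simp
  have S0: "S \<ge> 0" unfolding S_def a_def by (intro sum_nonneg) simp
  have "(Lyap n a y - 1)^2 \<le> 1/9 * S"
    using CS G S0 by (meson dual_order.trans mult_right_mono)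
  then have P2: "SFL_gen n \<theta> (Lyap n a) y \<le> a - (1 - a)\<^sup>2 / (2 * a) * (Lyap n a y - 1)\<^sup>2"
  proof -
    have c: "(1 - a)\<^sup>2 / (2 * a) = 81/20" unfolding a_def by (simp add: power2_eq_square)
    have h: "(1 - a)/2 = 9/20" unfolding a_def by simp
    have "SFL_gen n \<theta> (Lyap n a) y \<le> a - 9/20 * S" using P1 unfolding h .
    then show ?thesis unfolding c using \<open>(Lyap n a y - 1)^2 \<le> 1/9 * S\<close> by linarith
  qed
  show ?thesis using P1 P2 unfolding a_def S_def by simp
qed
end
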